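(* If $P$ is a finite interval order having an interval representation in which every interval has length $0$ or $1$, then $\dim(P) \le 3$.
   Context: Posets are finite and reflexive. An interval representation of a poset $P$ assigns to each element $x$ a closed bounded interval $[\ell(x), r(x)]$ (possibly degenerate, $\ell(x)=r(x)$, which has length $0$) such that for distinct $x,y$, $x<y$ in $P$ if and only if $r(x)<\ell(y)$. The dimension $\dim(P)$ is the minimum number of linear extensions of $P$ whose intersection is $P$ (i.e. $x<y$ in $P$ iff $x<y$ in each of them). *)

theory Defs
  imports Complex_Main
begin

definition poset_on :: "'a set \<Rightarrow> ('a \<Rightarrow> 'a \<Rightarrow> bool) \<Rightarrow> bool" where
  "poset_on X le \<longleftrightarrow>
     (\<forall>x\<in>X. le x x) \<and>
     (\<forall>x\<in>X. \<forall>y\<in>X. le x y \<and> le y x \<longrightarrow> x = y) \<and>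
     (\<forall>x\<in>X. \<forall>y\<in>X. \<forall>z\<in>X. le x y \<and> le y z \<longrightarrow> le x z)"

definition linear_extension :: "'a set \<Rightarrow> ('a \<Rightarrow> 'a \<Rightarrow> bool) \<Rightarrow> ('a \<Rightarrow> 'a \<Rightarrow> bool) \<Rightarrow> bool" where
  "linear_extension X le L \<longleftrightarrow>
     poset_on X L \<and>
     (\<forall>x\<in>X. \<forall>y\<in>X. L x y \<or> L y x) \<and>
     (\<forall>x\<in>X. \<forall>y\<in>X. le x y \<longrightarrow> L x y)"

definition realizer :: "'a set \<Rightarrow> ('a \<Rightarrow> 'a \<Rightarrow> bool) \<Rightarrow> nat \<Rightarrow> (nat \<Rightarrow> 'a \<Rightarrow> 'a \<Rightarrow> bool) \<Rightarrow> bool" where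
  "realizer X le k Ls \<longleftrightarrow>
     (\<forall>i<k. linear_extension X le (Ls i)) \<and>
     (\<forall>x\<in>X. \<forall>y\<in>X. x \<noteq> y \<longrightarrow> (le x y \<longleftrightarrow> (\<forall>i<k. Ls i x y)))"

definition poset_dim :: "'a set \<Rightarrow> ('a \<Rightarrow> 'a \<Rightarrow> bool) \<Rightarrow> nat" where
  "poset_dim X le = (LEAST k. k \<ge> 1 \<and> (\<exists>Ls. realizer X le k Ls))"

definition interval_rep :: "'a set \<Rightarrow> ('a \<Rightarrow> 'a \<Rightarrow> bool) \<Rightarrow> ('a \<Rightarrow> real) \<Rightarrow> ('a \<Rightarrow> real) \<Rightarrow> bool" where
  "interval_rep X le l r \<longleftrightarrow>
     (\<forall>x\<in>X. l x \<le> r x) \<and>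
     (\<forall>x\<in>X. \<forall>y\<in>X. x \<noteq> y \<longrightarrow> (le x y \<longleftrightarrow> r x < l y))"

end

theory Submission
  imports Defs "HOL-Library.Product_Lexorder"
begin


definition kE :: "int \<Rightarrow> real \<Rightarrow> bool \<Rightarrow> int \<times> real \<times> real" where
 "kE q v u = ((\<lfloor>v\<rfloor> - q) div 2,
    if u then v - of_int \<lfloor>v\<rfloor> else if odd (\<lfloor>v\<rfloor> - q) then v - of_int \<lfloor>v\<rfloor> else -1,
    if u then - of_int \<lfloor>v\<rfloor> else if odd (\<lfloor>v\<rfloor> - q) then 1/2 - of_int \<lfloor>v\<rfloor> else v - of_int \<lfloor>v\<rfloor>)"

definition k3 :: "real \<Rightarrow> bool \<Rightarrow> int \<times> real \<times> real" where
 "k3 v u = (\<lfloor>v\<rfloor>, if u then 1 else 0, if u then -v else v)"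

definition RR :: "real \<Rightarrow> bool \<Rightarrow> real" where "RR v u = v + (if u then 1 else 0)"

lemma int_lt: "real_of_int i < real_of_int j + 1 \<Longrightarrow> i \<le> j"
proof -
  assume "real_of_int i < real_of_int j + 1"
  then have "real_of_int i < real_of_int (j + 1)" by simp
  then have "i < j + 1" by (simp only: of_int_less_iff)
  then show ?thesis by simp
qed

lemma int_lt2: "real_of_int i + 1 < real_of_int j + 1 \<Longrightarrow> i < j"
  by simp

lemma floor_facts: "of_int \<lfloor>v\<rfloor> \<le> v" "v < of_int \<lfloor>v\<rfloor> + 1" for v :: real
  by linarith+

lemma k3_mono: assumes "RR a ua < b" shows "k3 a ua < k3 b ub"
proof -
  define i where "i = \<lfloor>a\<rfloor>"
  define j where "j = \<lfloor>b\<rfloor>"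
  have a: "of_int i \<le> a" "a < of_int i + 1" unfolding i_def by linarith+
  have b: "of_int j \<le> b" "b < of_int j + 1" unfolding j_def by linarith+
  have "i \<le> j" using a b assms unfolding RR_def
    by (intro int_lt) (auto split: if_splits)
  then consider "i < j" | "i = j" by linarith
  then show ?thesis
  proof cases
    case 1 then show ?thesis unfolding k3_def i_def j_def by simp
  next
    case 2
    then have "\<not> ua" using a b assms unfolding RR_def by auto
    then show ?thesis using 2 assms unfolding k3_def i_def j_def RR_def by auto
  qed
qed

lemma kE_mono: assumes "RR a ua < b" shows "kE q a ua < kE q b ub"
proof -
  define i where "i = \<lfloor>a\<rfloor>"
  define j where "j = \<lfloor>b\<rfloor>"
  have a: "of_int i \<le> a" "a < of_int i + 1" unfolding i_def by linarith+
  have b: "of_int j \<le> b" "b < of_int j + 1" unfolding j_def by linarith+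
  have ij: "i \<le> j" using a b assms unfolding RR_def
    by (intro int_lt) (auto split: if_splits)
  have ij2: "ua \<Longrightarrow> i < j" using a b assms unfolding RR_def
    by (intro int_lt2) auto
  have kE': "kE q v u = ((\<lfloor>v\<rfloor> - q) div 2,
    if u then v - of_int \<lfloor>v\<rfloor> else if odd (\<lfloor>v\<rfloor> - q) then v - of_int \<lfloor>v\<rfloor> else -1,
    if u then - of_int \<lfloor>v\<rfloor> else if odd (\<lfloor>v\<rfloor> - q) then 1/2 - of_int \<lfloor>v\<rfloor> else v - of_int \<lfloor>v\<rfloor>)" for v u
    by (simp add: kE_def)
  consider "(i - q) div 2 < (j - q) div 2" | "(i - q) div 2 = (j - q) div 2"
    using ij by (meson zdiv_mono1 order_le_less zero_less_numeral diff_right_mono)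
  then show ?thesis
  proof cases
    case 1 then show ?thesis unfolding kE_def i_def[symmetric] j_def[symmetric] by simp
  next
    case 2
    then have "i = j \<or> (j = i + 1 \<and> even (i - q))" using ij by presburger
    then consider "i = j" | "j = i + 1" "even (i - q)" by blast
    then show ?thesis
    proof cases
      case 1
      then show ?thesis using a b assms unfolding kE_def i_def[symmetric] j_def[symmetric] RR_def
        by auto
    next
      case 2
      then show ?thesis using a b assms `(i - q) div 2 = (j - q) div 2` unfolding kE_def i_def[symmetric] j_def[symmetric] RR_def
        by auto
    qed
  qed
qed

lemma kE_eq: "\<lfloor>v\<rfloor> = i \<Longrightarrow> kE q v u = ((i - q) div 2,
    if u then v - of_int i else if odd (i - q) then v - of_int i else -1,
    if u then - of_int i else if odd (i - q) then 1/2 - of_int i else v - of_int i)"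
  by (simp add: kE_def)

lemma k3_eq: "\<lfloor>v\<rfloor> = i \<Longrightarrow> k3 v u = (i, if u then 1 else 0, if u then -v else v)"
  by (simp add: k3_def)

lemma exq: "\<exists>q::int. (q = 0 \<or> q = 1) \<and> even (i - q)" "\<exists>q::int. (q = 0 \<or> q = 1) \<and> odd (i - q)"
  by presburger+

lemma inter: assumes "a \<le> RR b ub" "b \<le> RR a ua"
  shows "(\<exists>q::int. (q = 0 \<or> q = 1) \<and> kE q b ub < kE q a ua) \<or> k3 b ub < k3 a ua \<or>
         (kE 0 b ub = kE 0 a ua \<and> k3 b ub = k3 a ua)"
proof -
  define i where "i = \<lfloor>a\<rfloor>"
  define j where "j = \<lfloor>b\<rfloor>"
  have a: "of_int i \<le> a" "a < of_int i + 1" unfolding i_def by linarith+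
  have b: "of_int j \<le> b" "b < of_int j + 1" unfolding j_def by linarith+
  have ij: "i \<le> j + 1"
    using a b assms unfolding RR_def by (intro int_lt) (auto split: if_splits)
  have ji: "j \<le> i + 1"
    using a b assms unfolding RR_def by (intro int_lt) (auto split: if_splits)
  note eqs = kE_eq[OF i_def[symmetric]] kE_eq[OF j_def[symmetric]] k3_eq[OF i_def[symmetric]] k3_eq[OF j_def[symmetric]]
  consider "j = i" | "j = i + 1" | "j = i - 1" using ij ji by linarith
  then show ?thesis
  proof cases
    case 1
    consider "ua" "ub" | "ua" "\<not> ub" | "\<not> ua" "ub" | "\<not> ua" "\<not> ub" by blast
    then show ?thesis
    proof cases
      case 1
      then consider "a < b" | "b < a" | "a = b" by linarith
      then show ?thesis
      proof cases
        case 1 then have "k3 b ub < k3 a ua" using \<open>j = i\<close> \<open>ua\<close> \<open>ub\<close> by (simp add: eqs)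
        then show ?thesis by blast
      next
        case 2 then have "kE 0 b ub < kE 0 a ua" using \<open>j = i\<close> \<open>ua\<close> \<open>ub\<close> by (simp add: eqs)
        then show ?thesis by blast
      next
        case 3 then show ?thesis using \<open>j = i\<close> \<open>ua\<close> \<open>ub\<close> by (simp add: eqs)
      qed
    next
      case 2
      obtain q where q: "q = 0 \<or> q = 1" "even (i - q)" using exq by blast
      have "kE q b ub < kE q a ua" using 2 q a \<open>j = i\<close> by (simp add: eqs)
      then show ?thesis using q by blast
    next
      case 3
      obtain q where q: "q = 0 \<or> q = 1" "odd (i - q)" using exq by blast
      have "b \<le> a" using 3 assms(2) by (simp add: RR_def)
      then have "kE q b ub < kE q a ua" using 3 q a \<open>j = i\<close> by (auto simp add: eqs)
      then show ?thesis using q by blast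
    next
      case 4
      then have "a = b" using assms by (simp add: RR_def)
      then show ?thesis using 4 by simp
    qed
  next
    case 2
    consider "ua" "ub" | "ua" "\<not> ub" | "\<not> ua" by blast
    then show ?thesis
    proof cases
      case 1
      obtain q where q: "q = 0 \<or> q = 1" "even (i - q)" using exq by blast
      have d: "(i + 1 - q) div 2 = (i - q) div 2" using q by presburger
      have "b \<le> a + 1" using 1 assms(2) by (simp add: RR_def)
      then have "kE q b ub < kE q a ua" using 1 q d a \<open>j = i + 1\<close> by (auto simp add: eqs)
      then show ?thesis using q by blast
    next
      case 2
      obtain q where q: "q = 0 \<or> q = 1" "even (i - q)" using exq by blast
      have d: "(i + 1 - q) div 2 = (i - q) div 2" "odd (i + 1 - q)" using q by presburger+
      have "b \<le> a + 1" using 2 assms(2) by (simp add: RR_def)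
      then have "kE q b ub < kE q a ua" using 2 q d a \<open>j = i + 1\<close> by (auto simp add: eqs)
      then show ?thesis using q by blast
    next
      case 3
      then have "b \<le> a" using assms(2) by (simp add: RR_def)
      then show ?thesis using a b \<open>j = i + 1\<close> by simp
    qed
  next
    case 3
    then have "k3 b ub < k3 a ua" by (simp add: eqs)
    then show ?thesis by blast
  qed
qed


lemma pair_le_fst: "(a, b) \<le> (c, d) \<Longrightarrow> c < a \<Longrightarrow> False" for a c :: "'k::linorder" and b d :: "'j::linorder"
  by auto

lemma lin_ext:
  fixes K :: "'a \<Rightarrow> 'k::linorder" and t :: "'a \<Rightarrow> int"
  assumes "poset_on X le" "inj_on t X" "\<forall>x\<in>X. \<forall>y\<in>X. x \<noteq> y \<longrightarrow> le x y \<longrightarrow> K x < K y"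
  shows "linear_extension X le (\<lambda>x y. (K x, t x) \<le> (K y, t y))"
proof -
  have anti: "x = y" if "x \<in> X" "y \<in> X" "(K x, t x) \<le> (K y, t y)" "(K y, t y) \<le> (K x, t x)" for x y
  proof -
    from that have "(K x, t x) = (K y, t y)" by (meson order_antisym)
    then show ?thesis using assms(2) that(1,2) by (auto dest: inj_onD)
  qed
  show ?thesis
    unfolding linear_extension_def poset_on_def
  proof (intro conjI ballI impI)
    fix x y assume "x \<in> X" "y \<in> X" "le x y"
    show "(K x, t x) \<le> (K y, t y)"
    proof (cases "x = y")
      case False
      then have "K x < K y" using assms(3) \<open>x \<in> X\<close> \<open>y \<in> X\<close> \<open>le x y\<close> by blast
      then show ?thesis by simp
    qed simp
  qed (auto intro: anti order_trans simp del: less_eq_prod_simp)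
qed

theorem theorem3:
  fixes X :: "'a set" and le :: "'a \<Rightarrow> 'a \<Rightarrow> bool"
    and l r :: "'a \<Rightarrow> real"
  assumes "finite X"
    and "poset_on X le"
    and "interval_rep X le l r"
    and "\<forall>x\<in>X. r x - l x = 0 \<or> r x - l x = 1"
  shows "poset_dim X le \<le> 3"
proof -
  define u where "u x = (r x - l x = 1)" for x
  have rr: "r x = RR (l x) (u x)" if "x \<in> X" for x
    using assms(4) that unfolding u_def RR_def by auto
  have rep: "le x y \<longleftrightarrow> RR (l x) (u x) < l y" if "x \<in> X" "y \<in> X" "x \<noteq> y" for x y
    using assms(3) that rr unfolding interval_rep_def by auto
  obtain g :: "'a \<Rightarrow> nat" and n where "g ` X = {i. i < n}" "inj_on g X"
    using finite_imp_inj_to_nat_seg[OF assms(1)] by blast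
  define t where "t x = int (g x)" for x
  have tinj: "inj_on t X" using \<open>inj_on g X\<close> unfolding t_def inj_on_def by auto
  have tinj2: "inj_on (\<lambda>x. - t x) X" using tinj unfolding inj_on_def by auto
  define L where "L i = (if i = (0::nat) then (\<lambda>x y. (kE 0 (l x) (u x), t x) \<le> (kE 0 (l y) (u y), t y))
     else if i = 1 then (\<lambda>x y. (kE 1 (l x) (u x), t x) \<le> (kE 1 (l y) (u y), t y))
     else (\<lambda>x y. (k3 (l x) (u x), - t x) \<le> (k3 (l y) (u y), - t y)))" for i
  have cmpE: "\<forall>x\<in>X. \<forall>y\<in>X. x \<noteq> y \<longrightarrow> le x y \<longrightarrow> kE q (l x) (u x) < kE q (l y) (u y)" for q
    using rep kE_mono by blast
  have cmp3: "\<forall>x\<in>X. \<forall>y\<in>X. x \<noteq> y \<longrightarrow> le x y \<longrightarrow> k3 (l x) (u x) < k3 (l y) (u y)"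
    using rep k3_mono by blast
  have ext: "linear_extension X le (L i)" for i
    unfolding L_def
    using lin_ext[OF assms(2) tinj cmpE[of 0]] lin_ext[OF assms(2) tinj cmpE[of 1]]
      lin_ext[OF assms(2) tinj2 cmp3] by auto
  have real: "realizer X le 3 L"
    unfolding realizer_def
  proof (intro conjI ballI impI allI)
    fix i :: nat assume "i < 3" show "linear_extension X le (L i)" by (rule ext)
  next
    fix x y assume xy: "x \<in> X" "y \<in> X" "x \<noteq> y"
    show "le x y \<longleftrightarrow> (\<forall>i<3. L i x y)"
    proof
      assume "le x y"
      then show "\<forall>i<3. L i x y" using ext xy unfolding linear_extension_def by blast
    next
      assume all: "\<forall>i<3. L i x y"
      have L0: "(kE 0 (l x) (u x), t x) \<le> (kE 0 (l y) (u y), t y)"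
        using all[rule_format, of 0] by (simp add: L_def del: less_eq_prod_simp)
      have L1: "(kE 1 (l x) (u x), t x) \<le> (kE 1 (l y) (u y), t y)"
        using all[rule_format, of 1] by (simp add: L_def del: less_eq_prod_simp)
      have L3: "(k3 (l x) (u x), - t x) \<le> (k3 (l y) (u y), - t y)"
        using all[rule_format, of 2] by (simp add: L_def del: less_eq_prod_simp)
      show "le x y"
      proof (rule ccontr)
        assume nle: "\<not> le x y"
        then have h1: "l y \<le> RR (l x) (u x)" using rep xy by auto
        show False
        proof (cases "le y x")
          case True
          then have "kE 0 (l y) (u y) < kE 0 (l x) (u x)" using cmpE[of 0] xy by metis
          then show False using pair_le_fst[OF L0] by blast
        next
          case False
          then have h2: "l x \<le> RR (l y) (u y)" using rep xy by auto
          from inter[OF h2 h1] consider (a) q :: int where "q = 0 \<or> q = 1" "kE q (l y) (u y) < kE q (l x) (u x)"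
            | (b) "k3 (l y) (u y) < k3 (l x) (u x)"
            | (c) "kE 0 (l y) (u y) = kE 0 (l x) (u x)" "k3 (l y) (u y) = k3 (l x) (u x)" by blast
          then show False
          proof cases
            case (a q)
            then show False using pair_le_fst[OF L0] pair_le_fst[OF L1] by blast
          next
            case b
            then show False using pair_le_fst[OF L3] by blast
          next
            case c
            note e = c
            have "t x \<noteq> t y" using tinj xy unfolding inj_on_def by blast
            then show False using L0 L3 e by auto
          qed
        qed
      qed
    qed
  qed
  have "poset_dim X le \<le> 3"
    unfolding poset_dim_def by (rule Least_le) (use real in auto)
  then show ?thesis .
qed

end
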